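(* Let $\pi$ be a $k$-permutation and $i,j\in\mathbb{N}_0$. If $i\le k-2$ and $j\le k-2$, then $$c_{i,j}(P_\pi)=\frac{k!\,(-1)^{i+j}}{i!\,j!\,(k-i-2)!\,(k-j-2)!}\left(\mathbf{b}_{i+2}^T\,A_\pi\,\mathbf{b}_{j+2}\right),$$ and otherwise $c_{i,j}(P_\pi)=0$.
   Context: A $k$-permutation is a bijection of $[k]=\{1,\dots,k\}$. Its gradient polynomial is $P_\pi(\alpha,\beta)=k!\sum_{m\in[k]}\left(\frac{k-m}{1-\alpha}-\frac{m-1}{\alpha}\right)\left(\frac{k-\pi(m)}{1-\beta}-\frac{\pi(m)-1}{\beta}\right)\frac{\alpha^{m-1}(1-\alpha)^{k-m}\beta^{\pi(m)-1}(1-\beta)^{k-\pi(m)}}{(m-1)!(k-m)!(\pi(m)-1)!(k-\pi(m))!}$ (a polynomial in $\alpha,\beta$). For a polynomial $P(\alpha,\beta)$, $c_{i,j}(P)$ is the coefficient of $\alpha^i\beta^j$. The permutation matrix $A_\pi\in\mathbb{R}^{k\times k}$ has $(A_\pi)_{i,j}=1$ if $\pi(i)=j$ and $0$ otherwise. For $a\in[k]$, $\mathbf{b}_a=\mathbf{b}^k_a\in\mathbb{R}^k$ is the column vector with $(\mathbf{b}_a)_\ell=(-1)^{\ell-1}\binom{a-1}{\ell-1}$ for $1\le\ell\le a$ and $(\mathbf{b}_a)_\ell=0$ for $\ell>a$. *)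

theory Defs
  imports "HOL-Computational_Algebra.Polynomial" "HOL-Combinatorics.Permutations"
begin

text \<open>Bivariate real polynomials in \<alpha>, \<beta> are represented as \<open>real poly poly\<close>:
  the outer variable is \<beta>, the coefficients are polynomials in \<alpha>.\<close>

definition c_coeff :: "real poly poly \<Rightarrow> nat \<Rightarrow> nat \<Rightarrow> real" where
  "c_coeff P i j = coeff (coeff P j) i"

text \<open>The polynomial (in one variable x) equal to
  ((k-m)/(1-x) - (m-1)/x) * x^(m-1) * (1-x)^(k-m),
  the divisions being carried out exactly (the terms vanish when k-m = 0, resp. m-1 = 0).\<close>
definition grad_factor :: "nat \<Rightarrow> nat \<Rightarrow> real poly" where
  "grad_factor k m =
     (if m < k then smult (real (k - m)) (monom 1 (m - 1) * [:1, -1:] ^ (k - m - 1)) else 0)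
   - (if 1 < m then smult (real (m - 1)) (monom 1 (m - 2) * [:1, -1:] ^ (k - m)) else 0)"

definition gradient_poly :: "nat \<Rightarrow> (nat \<Rightarrow> nat) \<Rightarrow> real poly poly" where
  "gradient_poly k \<pi> =
     (\<Sum>m\<in>{1..k}.
        smult (smult (fact k / (fact (m - 1) * fact (k - m) * fact (\<pi> m - 1) * fact (k - \<pi> m)))
                     (grad_factor k m))
              (map_poly (\<lambda>c. [:c:]) (grad_factor k (\<pi> m))))"

definition perm_matrix :: "(nat \<Rightarrow> nat) \<Rightarrow> nat \<Rightarrow> nat \<Rightarrow> real" where
  "perm_matrix \<pi> i j = (if \<pi> i = j then 1 else 0)"

definition bvec :: "nat \<Rightarrow> nat \<Rightarrow> real" where
  "bvec a l = (if 1 \<le> l \<and> l \<le> a then (-1) ^ (l - 1) * real ((a - 1) choose (l - 1)) else 0)"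

definition bilin :: "nat \<Rightarrow> (nat \<Rightarrow> real) \<Rightarrow> (nat \<Rightarrow> nat \<Rightarrow> real) \<Rightarrow> (nat \<Rightarrow> real) \<Rightarrow> real" where
  "bilin k u A v = (\<Sum>l\<in>{1..k}. \<Sum>l'\<in>{1..k}. u l * A l l' * v l')"

end

theory Submission
  imports Defs
begin
lemma coeff_lin_pow: "coeff ([:1,-1:]^b :: real poly) n = (-1)^n * real (b choose n)"
proof (induction b arbitrary: n)
  case 0 then show ?case by (cases n) auto
next
  case (Suc b)
  have "[:1,-1:]^Suc b = [:1,-1:]^b - pCons 0 ([:1,-1:]^b :: real poly)"
    by (simp add: algebra_simps)
  then show ?case using Suc by (cases n) (auto simp: coeff_pCons algebra_simps)
qed

lemma coeff_h: "coeff (monom (1::real) a * [:1,-1:]^b) n =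
   (if a \<le> n then (-1)^(n-a) * real (b choose (n-a)) else 0)"
  by (simp add: coeff_monom_mult coeff_lin_pow)

lemma grad_pderiv:
  "grad_factor (a+b+1) (a+1) = - pderiv (monom (1::real) a * [:1,-1:]^b)"
proof -
  have "pderiv (monom (1::real) a * [:1,-1:]^b) =
     smult (real a) (monom 1 (a-1) * [:1,-1:]^b) - smult (real b) (monom 1 a * [:1,-1:]^(b-1))"
    by (simp add: pderiv_mult pderiv_power pderiv_monom pderiv_pCons algebra_simps monom_altdef flip: smult_monom)
  then show ?thesis unfolding grad_factor_def
    by (cases "a = 0"; cases "b = 0") (auto simp: algebra_simps)
qed

lemma coeff_grad:
  assumes "1 \<le> m" "m \<le> k"
  shows "coeff (grad_factor k m) i = (if i + 2 \<le> k then fact (m-1) * fact (k-m) * (-1)^i / (fact i * fact (k-i-2)) * bvec (i+2) m else 0)"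
proof -
  define a where "a = m - 1"
  define b where "b = k - m"
  have ab: "m = a + 1" "k = a + b + 1" using assms unfolding a_def b_def by auto
  have L: "coeff (grad_factor k m) i = - real (Suc i) * (if a \<le> Suc i then (-1)^(Suc i - a) * real (b choose (Suc i - a)) else 0)"
  proof -
    have g: "grad_factor k m = - pderiv (monom (1::real) a * [:1,-1:]^b)"
      using grad_pderiv[of a b] ab by simp
    show ?thesis unfolding g coeff_minus coeff_pderiv coeff_h by (simp add: algebra_simps)
  qed
  show ?thesis
  proof (cases "a \<le> Suc i")
    case False
    then show ?thesis unfolding L using False by (simp add: ab bvec_def)
  next
    case True
    then obtain s where s: "Suc i = a + s" using le_Suc_ex by blast
    show ?thesis
    proof (cases "s \<le> b")
      case False
      then show ?thesis unfolding L using False True s by (simp add: ab)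
    next
      case sb: True
      have k2: "i + 2 \<le> k" using s sb ab by simp
      have bv: "bvec (i+2) m = (-1)^a * real (Suc i choose a)"
        unfolding bvec_def ab using True by simp
      have f1: "real (Suc i choose a) = fact (Suc i) / (fact a * fact s)"
        using binomial_fact[OF True] s by simp
      have f2: "real (b choose s) = fact b / (fact s * fact (b - s))"
        using binomial_fact[OF sb] by simp
      have ki: "k - i - 2 = b - s" using ab s by simp
      have sg: "(-1::real)^i * (-1)^a = - ((-1)^s)"
      proof -
        have "even (i + a) = odd s" using s by presburger
        then show ?thesis by (auto simp add: minus_one_power_iff simp flip: power_add)
      qed
      have "fact (m-1) * fact (k-m) * (-1)^i / (fact i * fact (k-i-2)) * bvec (i+2) m
          = fact a * fact b * ((-1)^i * (-1)^a) / (fact i * fact (b-s)) * (fact (Suc i) / (fact a * fact s))"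
        unfolding bv f1 ki using ab by simp
      also have "\<dots> = - real (Suc i) * (-1)^s * (fact b / (fact s * fact (b - s)))"
        using sg by (simp add: fact_Suc field_simps)
      finally have R: "fact (m-1) * fact (k-m) * (-1)^i / (fact i * fact (k-i-2)) * bvec (i+2) m
          = - real (Suc i) * (-1)^s * real (b choose s)" unfolding f2 .
      have si: "Suc i - a = s" using s by simp
      have E: "coeff (grad_factor k m) i = - real (Suc i) * (-1)^s * real (b choose s)"
        unfolding L si using True by simp
      show ?thesis unfolding E R using k2 by simp
    qed
  qed
qed

lemma expand_c:
  "c_coeff (gradient_poly k \<pi>) i j = (\<Sum>m\<in>{1..k}. fact k / (fact (m-1)*fact(k-m)*fact(\<pi> m - 1)*fact(k-\<pi> m))
      * coeff (grad_factor k m) i * coeff (grad_factor k (\<pi> m)) j)"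
  unfolding c_coeff_def gradient_poly_def coeff_sum
  by (simp add: coeff_map_poly mult_ac)

lemma bilin_perm:
  assumes "\<pi> permutes {1..k}"
  shows "bilin k u (perm_matrix \<pi>) v = (\<Sum>l\<in>{1..k}. u l * v (\<pi> l))"
  unfolding bilin_def
proof (rule sum.cong[OF refl])
  fix l assume l: "l \<in> {1..k}"
  have "(\<Sum>l'\<in>{1..k}. u l * perm_matrix \<pi> l l' * v l') = (\<Sum>l'\<in>{1..k}. if \<pi> l = l' then u l * v l' else 0)"
    by (rule sum.cong) (auto simp: perm_matrix_def)
  also have "\<dots> = u l * v (\<pi> l)"
    using l permutes_in_image[OF assms] by (simp add: sum.delta)
  finally show "(\<Sum>l'\<in>{1..k}. u l * perm_matrix \<pi> l l' * v l') = u l * v (\<pi> l)" .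
qed

theorem lemma7:
  fixes k :: nat and \<pi> :: "nat \<Rightarrow> nat" and i j :: nat
  assumes "\<pi> permutes {1..k}"
  shows "c_coeff (gradient_poly k \<pi>) i j =
    (if i + 2 \<le> k \<and> j + 2 \<le> k
     then fact k * (-1) ^ (i + j) / (fact i * fact j * fact (k - i - 2) * fact (k - j - 2))
          * bilin k (bvec (i + 2)) (perm_matrix \<pi>) (bvec (j + 2))
     else 0)"
proof -
  have pm: "m \<in> {1..k} \<Longrightarrow> 1 \<le> \<pi> m \<and> \<pi> m \<le> k" for m
    using permutes_in_image[OF assms] by auto
  show ?thesis
  proof (cases "i + 2 \<le> k \<and> j + 2 \<le> k")
    case False
    have "c_coeff (gradient_poly k \<pi>) i j = 0"
      unfolding expand_c
    proof (rule sum.neutral, rule ballI)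
      fix m assume m: "m \<in> {1..k}"
      then show "fact k / (fact (m-1)*fact(k-m)*fact(\<pi> m - 1)*fact(k-\<pi> m))
      * coeff (grad_factor k m) i * coeff (grad_factor k (\<pi> m)) j = 0"
        using False pm[OF m] by (auto simp: coeff_grad)
    qed
    then show ?thesis unfolding if_not_P[OF False] .
  next
    case True
    define K :: real where "K = fact k * (-1) ^ (i + j) / (fact i * fact j * fact (k - i - 2) * fact (k - j - 2))"
    have "c_coeff (gradient_poly k \<pi>) i j = (\<Sum>m\<in>{1..k}. K * (bvec (i+2) m * bvec (j+2) (\<pi> m)))"
      unfolding expand_c
    proof (rule sum.cong[OF refl])
      fix m assume m: "m \<in> {1..k}"
      then show "fact k / (fact (m-1)*fact(k-m)*fact(\<pi> m - 1)*fact(k-\<pi> m))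
      * coeff (grad_factor k m) i * coeff (grad_factor k (\<pi> m)) j = K * (bvec (i+2) m * bvec (j+2) (\<pi> m))"
        using True pm[OF m] by (simp add: coeff_grad K_def power_add field_simps)
    qed
    also have "\<dots> = K * bilin k (bvec (i + 2)) (perm_matrix \<pi>) (bvec (j + 2))"
      by (simp add: bilin_perm[OF assms] sum_distrib_left)
    finally show ?thesis using True by (simp add: K_def)
  qed
qed

end
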